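(* Let $n\ge1$, $m\ge1$, $p>1$, and let $u=(u_1,\dots,u_m)$ be a smooth stable solution of $\Delta^2u_i=|u|^{p-1}u_i$ in $\mathbb{R}^n$, $i=1,\dots,m$. Set $w=(w_i)_{i=1}^m$ with $w_i=\Delta u_i$. Then there is a constant $C>0$ such that for every $\zeta\in C_c^\infty(\mathbb{R}^n)$, $$\int_{\mathbb{R}^n}(|w|^2+|u|^{p+1})\zeta^2\le C\int_{\mathbb{R}^n}|u|^2\big[|\nabla\Delta\zeta||\nabla\zeta|+|\Delta\zeta|^2+|\Delta(|\nabla\zeta|^2)|\big]+C\int_{\mathbb{R}^n}|u||w||\nabla\zeta|^2.$$
   Context: $|u|=(\sum_iu_i^2)^{1/2}$, $|w|=(\sum_iw_i^2)^{1/2}$. Stable means: $\sum_i\int|u|^{p-1}\phi_i^2+(p-1)\sum_{i,j}\int|u|^{p-3}u_iu_j\phi_i\phi_j\le\sum_i\int|\Delta\phi_i|^2$ for all $\phi_i\in C_c^\infty(\mathbb{R}^n)$. *)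

theory Defs
  imports "HOL-Analysis.Analysis"
begin

text \<open>Functions on R^n are modelled as functions on real^'n (n = CARD('n) >= 1).\<close>

definition partial :: "'n::finite \<Rightarrow> (real^'n \<Rightarrow> real) \<Rightarrow> real^'n \<Rightarrow> real" where
  "partial i f x = deriv (\<lambda>t. f (x + t *\<^sub>R axis i 1)) 0"

fun iter_partial :: "'n::finite list \<Rightarrow> (real^'n \<Rightarrow> real) \<Rightarrow> real^'n \<Rightarrow> real" where
  "iter_partial [] f = f"
| "iter_partial (i # is) f = partial i (iter_partial is f)"

definition smooth :: "(real^'n::finite \<Rightarrow> real) \<Rightarrow> bool" where
  "smooth f \<longleftrightarrow> (\<forall>is. continuous_on UNIV (iter_partial is f) \<and>
      (\<forall>i x. (\<lambda>t. iter_partial is f (x + t *\<^sub>R axis i 1)) differentiable (at 0)))"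

definition test_fun :: "(real^'n::finite \<Rightarrow> real) \<Rightarrow> bool" where
  "test_fun f \<longleftrightarrow> smooth f \<and> compact (closure {x. f x \<noteq> 0})"

definition laplacian :: "(real^'n::finite \<Rightarrow> real) \<Rightarrow> real^'n \<Rightarrow> real" where
  "laplacian f x = (\<Sum>i\<in>UNIV. partial i (partial i f) x)"

definition grad :: "(real^'n::finite \<Rightarrow> real) \<Rightarrow> real^'n \<Rightarrow> real^'n" where
  "grad f x = (\<chi> i. partial i f x)"

text \<open>Stability of u = (u_1..u_m), components u x $ i, |u| = norm (u x).\<close>
definition stable :: "real \<Rightarrow> (real^'n::finite \<Rightarrow> real^'m::finite) \<Rightarrow> bool" where
  "stable p u \<longleftrightarrow> (\<forall>\<phi> :: 'm \<Rightarrow> real^'n \<Rightarrow> real. (\<forall>i. test_fun (\<phi> i)) \<longrightarrow>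
     (\<Sum>i\<in>UNIV. (\<integral>x. norm (u x) powr (p - 1) * (\<phi> i x)\<^sup>2 \<partial>lborel))
     + (p - 1) * (\<Sum>i\<in>UNIV. \<Sum>j\<in>UNIV.
          (\<integral>x. norm (u x) powr (p - 3) * (u x $ i) * (u x $ j) * \<phi> i x * \<phi> j x \<partial>lborel))
     \<le> (\<Sum>i\<in>UNIV. (\<integral>x. (laplacian (\<phi> i) x)\<^sup>2 \<partial>lborel)))"

end

theory Submission
  imports Defs
begin


definition diffk :: "(real^'n::finite \<Rightarrow> real) \<Rightarrow> bool" where
  "diffk f \<longleftrightarrow> (\<forall>i x. (\<lambda>t. f (x + t *\<^sub>R axis i 1)) differentiable (at 0))"

lemma smooth_iff: "smooth f \<longleftrightarrow> (\<forall>is. continuous_on UNIV (iter_partial is f) \<and> diffk (iter_partial is f))"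
  unfolding smooth_def diffk_def by blast

lemma iter_partial_snoc: "iter_partial (is @ [i]) f = iter_partial is (partial i f)"
  by (induction "is") auto

lemma partial_has:
  assumes "diffk f"
  shows "((\<lambda>t. f (x + t *\<^sub>R axis i 1)) has_real_derivative partial i f x) (at 0)"
  using assms unfolding diffk_def partial_def
  by (simp add: DERIV_deriv_iff_real_differentiable)

lemma diffk_has:
  assumes "\<And>x i. ((\<lambda>t. f (x + t *\<^sub>R axis i 1)) has_real_derivative D i x) (at 0)"
  shows "diffk f" "partial i f x = D i x"
proof -
  show "diffk f" unfolding diffk_def using assms real_differentiable_def by blast
  show "partial i f x = D i x" unfolding partial_def using assms DERIV_imp_deriv by blast
qed

lemma partial_add:
  assumes "diffk f" "diffk g"
  shows "partial i (\<lambda>x. f x + g x) x = partial i f x + partial i g x"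
    "diffk (\<lambda>x. f x + g x)"
proof -
  have h: "\<And>x i. ((\<lambda>t. f (x + t *\<^sub>R axis i 1) + g (x + t *\<^sub>R axis i 1)) has_real_derivative partial i f x + partial i g x) (at 0)"
    by (intro DERIV_add partial_has assms)
  show "partial i (\<lambda>x. f x + g x) x = partial i f x + partial i g x" "diffk (\<lambda>x. f x + g x)"
    using diffk_has[of "\<lambda>x. f x + g x", OF h] by auto
qed

lemma partial_mult:
  assumes "diffk f" "diffk g"
  shows "partial i (\<lambda>x. f x * g x) x = partial i f x * g x + f x * partial i g x"
    "diffk (\<lambda>x. f x * g x)"
proof -
  have h: "\<And>x i. ((\<lambda>t. f (x + t *\<^sub>R axis i 1) * g (x + t *\<^sub>R axis i 1)) has_real_derivative partial i f x * g x + f x * partial i g x) (at 0)"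
  proof -
    fix x i
    show "((\<lambda>t. f (x + t *\<^sub>R axis i 1) * g (x + t *\<^sub>R axis i 1)) has_real_derivative partial i f x * g x + f x * partial i g x) (at 0)"
      using DERIV_mult[OF partial_has[OF assms(1), of x i] partial_has[OF assms(2), of x i]] by (simp add: algebra_simps)
  qed
  show "partial i (\<lambda>x. f x * g x) x = partial i f x * g x + f x * partial i g x" "diffk (\<lambda>x. f x * g x)"
    using diffk_has[of "\<lambda>x. f x * g x", OF h] by auto
qed

lemma partial_const: "partial i (\<lambda>x. c) x = 0" "diffk (\<lambda>x. c)"
  using diffk_has[of "\<lambda>x. c" "\<lambda>i x. 0"] by auto

lemma iter_partial_add_gen:
  assumes "\<And>ks. length ks < length js \<Longrightarrow> diffk (iter_partial ks f) \<and> diffk (iter_partial ks g)"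
  shows "iter_partial js (\<lambda>x. f x + g x) = (\<lambda>x. iter_partial js f x + iter_partial js g x)"
  using assms
proof (induction js)
  case Nil then show ?case by simp
next
  case (Cons k ks)
  have ih: "iter_partial ks (\<lambda>x. f x + g x) = (\<lambda>x. iter_partial ks f x + iter_partial ks g x)"
    using Cons.prems by (intro Cons.IH) auto
  have d: "diffk (iter_partial ks f)" "diffk (iter_partial ks g)" using Cons.prems[of ks] by auto
  show ?case unfolding iter_partial.simps ih by (simp add: fun_eq_iff partial_add(1)[OF d])
qed

lemma smooth_add:
  assumes "smooth f" "smooth g"
  shows "smooth (\<lambda>x. f x + g x)"
proof -
  have e: "iter_partial is (\<lambda>x. f x + g x) = (\<lambda>x. iter_partial is f x + iter_partial is g x)" for "is"
    using assms by (intro iter_partial_add_gen) (auto simp: smooth_iff)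
  show ?thesis unfolding smooth_iff e
    using assms by (auto simp: smooth_iff intro!: continuous_intros partial_add)
qed

lemma smooth_const: "smooth (\<lambda>x. c)"
proof -
  have E: "iter_partial is (\<lambda>x. c) = (\<lambda>x. if is = [] then c else 0)" for "is"
  proof (induction "is")
    case Nil then show ?case by simp
  next
    case (Cons a "is") show ?case unfolding iter_partial.simps Cons.IH by (simp add: fun_eq_iff partial_const)
  qed
  show ?thesis unfolding smooth_iff E using partial_const(2) by (simp add: partial_const(2))
qed

lemma smooth_partial: "smooth f \<Longrightarrow> smooth (partial i f)"
  unfolding smooth_iff by (metis iter_partial_snoc)

lemma smooth_cont: "smooth f \<Longrightarrow> continuous_on UNIV f"
  unfolding smooth_iff by (metis iter_partial.simps(1))

lemma smooth_diffk: "smooth f \<Longrightarrow> diffk f"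
  unfolding smooth_iff by (metis iter_partial.simps(1))

lemma smooth_mult_aux:
  "\<forall>(f::real^'n::finite \<Rightarrow> real) g (is::'n list). smooth f \<longrightarrow> smooth g \<longrightarrow> length is \<le> n \<longrightarrow>
     continuous_on UNIV (iter_partial is (\<lambda>x. f x * g x)) \<and> diffk (iter_partial is (\<lambda>x. f x * g x))"
proof (induction n)
  case 0
  show ?case
  proof (intro allI impI)
    fix f g :: "real^'n \<Rightarrow> real" and "is" :: "'n list"
    assume f: "smooth f" and g: "smooth g" and len: "length is \<le> 0"
    then have "is = []" by simp
    then show "continuous_on UNIV (iter_partial is (\<lambda>x. f x * g x)) \<and> diffk (iter_partial is (\<lambda>x. f x * g x))"
      using smooth_cont[OF f] smooth_cont[OF g] partial_mult(2)[OF smooth_diffk[OF f] smooth_diffk[OF g]]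
      by (auto intro!: continuous_intros)
  qed
next
  case (Suc n)
  show ?case
  proof (intro allI impI)
    fix f g :: "real^'n \<Rightarrow> real" and "is" :: "'n list"
    assume f: "smooth f" and g: "smooth g" and len: "length is \<le> Suc n"
    show "continuous_on UNIV (iter_partial is (\<lambda>x. f x * g x)) \<and> diffk (iter_partial is (\<lambda>x. f x * g x))"
    proof (cases "length is \<le> n")
      case True then show ?thesis using Suc.IH f g by blast
    next
      case False
      then obtain js i where isj: "is = js @ [i]"
        by (cases "is" rule: rev_cases) auto
      then have lj: "length js \<le> n" using len by simp
      have pd: "partial i (\<lambda>x. f x * g x) = (\<lambda>x. partial i f x * g x + f x * partial i g x)"
        using partial_mult[OF smooth_diffk[OF f] smooth_diffk[OF g]] by (auto simp: fun_eq_iff)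
      have A: "continuous_on UNIV (iter_partial ks (\<lambda>x. partial i f x * g x)) \<and> diffk (iter_partial ks (\<lambda>x. partial i f x * g x))"
        if "length ks \<le> n" for ks
        using Suc.IH smooth_partial[OF f] g that by blast
      have B: "continuous_on UNIV (iter_partial ks (\<lambda>x. f x * partial i g x)) \<and> diffk (iter_partial ks (\<lambda>x. f x * partial i g x))"
        if "length ks \<le> n" for ks
        using Suc.IH smooth_partial[OF g] f that by blast
      have e: "iter_partial js (\<lambda>x. partial i f x * g x + f x * partial i g x) =
          (\<lambda>x. iter_partial js (\<lambda>x. partial i f x * g x) x + iter_partial js (\<lambda>x. f x * partial i g x) x)"
        using A B lj by (intro iter_partial_add_gen) auto
      show ?thesis unfolding isj iter_partial_snoc pd e
        using A[OF lj] B[OF lj] by (auto intro!: continuous_intros partial_add)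
    qed
  qed
qed

lemma smooth_mult:
  assumes "smooth f" "smooth g"
  shows "smooth (\<lambda>x. f x * g x)"
  using smooth_mult_aux assms unfolding smooth_iff by blast

lemma smooth_sum:
  assumes "\<And>i. smooth (F i)"
  shows "smooth (\<lambda>x. \<Sum>i\<in>A. F i x)"
proof (cases "finite A")
  case True then show ?thesis
    by (induction A rule: finite_induct) (auto intro: smooth_add smooth_const assms)
next
  case False then show ?thesis by (simp add: smooth_const)
qed

lemma partial_sum:
  assumes "\<And>i. diffk (F i)"
  shows "partial k (\<lambda>x. \<Sum>i\<in>A. F i x) x = (\<Sum>i\<in>A. partial k (F i) x)"
    "diffk (\<lambda>x. \<Sum>i\<in>A. F i x)"
proof -
  have h: "\<And>x k. ((\<lambda>t. \<Sum>i\<in>A. F i (x + t *\<^sub>R axis k 1)) has_real_derivative (\<Sum>i\<in>A. partial k (F i) x)) (at 0)"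
    by (intro DERIV_sum partial_has assms)
  show "partial k (\<lambda>x. \<Sum>i\<in>A. F i x) x = (\<Sum>i\<in>A. partial k (F i) x)" "diffk (\<lambda>x. \<Sum>i\<in>A. F i x)"
    using diffk_has[of "\<lambda>x. \<Sum>i\<in>A. F i x", OF h] by auto
qed

lemma smooth_laplacian: "smooth f \<Longrightarrow> smooth (laplacian f)"
  unfolding laplacian_def by (intro smooth_sum smooth_partial)



lemma partial_zero_outside:
  fixes f :: "real^'n::finite \<Rightarrow> real"
  assumes K: "closed K" and z: "\<And>y. y \<notin> K \<Longrightarrow> f y = 0" and x: "x \<notin> K"
  shows "partial i f x = 0"
proof -
  obtain e where e: "e > 0" "ball x e \<subseteq> - K"
    using K x by (metis open_contains_ball closed_def ComplI)
  have "((\<lambda>t. f (x + t *\<^sub>R axis i 1)) has_real_derivative 0) (at 0)"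
  proof (rule has_field_derivative_transform_within[where f="\<lambda>t. 0" and d=e and S=UNIV])
    show "((\<lambda>t. 0) has_real_derivative 0) (at 0)" by simp
    fix t :: real assume "dist t 0 < e"
    then have "x + t *\<^sub>R axis i 1 \<in> ball x e" by (simp add: dist_norm norm_axis_1)
    then show "0 = f (x + t *\<^sub>R axis i 1)" using e z by auto
  qed (use e in auto)
  then show ?thesis unfolding partial_def by (rule DERIV_imp_deriv)
qed

lemma integrable_cs:
  fixes f :: "real^'n::finite \<Rightarrow> real"
  assumes c: "continuous_on UNIV f" and K: "compact K" and z: "\<And>y. y \<notin> K \<Longrightarrow> f y = 0"
  shows "integrable lborel f"
proof -
  have "compact (f ` K)" using c K by (metis compact_continuous_image continuous_on_subset subset_UNIV)
  then obtain B where B: "\<And>y. y \<in> K \<Longrightarrow> \<bar>f y\<bar> \<le> B"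
    by (metis compact_imp_bounded bounded_real image_eqI)
  have Ks: "K \<in> sets lborel" using K by (simp add: compact_imp_closed borel_closed)
  have Kf: "emeasure lborel K < \<infinity>" using K emeasure_bounded_finite[OF compact_imp_bounded[OF K]] by simp
  have "integrable lborel (\<lambda>x. B * indicator K x)"
    using Ks Kf by (intro integrable_mult_right integrable_indicator) auto
  moreover have "f \<in> borel_measurable lborel" using c by (simp add: borel_measurable_continuous_onI)
  moreover have "AE x in lborel. norm (f x) \<le> norm (B * indicator K x)"
  proof (rule AE_I2)
    fix x show "norm (f x) \<le> norm (B * indicator K x)"
      using B[of x] z[of x] by (cases "x \<in> K") (auto simp: indicator_def)
  qed
  ultimately show ?thesis by (rule Bochner_Integration.integrable_bound)
qed

lemma int_partial_zero:
  fixes h :: "real^'n::finite \<Rightarrow> real"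
  assumes hc: "continuous_on UNIV h" and hd: "diffk h" and pc: "continuous_on UNIV (partial k h)"
    and K: "compact K" and z: "\<And>y. y \<notin> K \<Longrightarrow> h y = 0"
  shows "integrable lborel (partial k h)" "integral\<^sup>L lborel (partial k h) = 0"
proof -
  define e :: "real^'n" where "e = axis k 1"
  have ne: "norm e = 1" by (simp add: e_def norm_axis_1)
  define S where "S = {y + z |y z. y \<in> K \<and> z \<in> cball (0::real^'n) 1}"
  define S2 where "S2 = {y + z |y z. y \<in> K \<and> z \<in> cball (0::real^'n) 2}"
  have S: "compact S" unfolding S_def by (intro compact_sums K compact_cball)
  have S2: "compact S2" unfolding S2_def by (intro compact_sums K compact_cball)
  have KS: "K \<subseteq> S" unfolding S_def by force
  have "compact (partial k h ` S2)" using pc S2 by (metis compact_continuous_image continuous_on_subset subset_UNIV)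
  then obtain M where M: "\<And>y. y \<in> S2 \<Longrightarrow> \<bar>partial k h y\<bar> \<le> M"
    by (metis compact_imp_bounded bounded_real image_eqI)
  define q where "q = (\<lambda>(n::nat) x. (h (x + (1 / (real n + 1)) *\<^sub>R e) - h x) / (1 / (real n + 1)))"
  have shiftz: "h (x + t *\<^sub>R e) = 0" if "x \<notin> S" "\<bar>t\<bar> \<le> 1" for x t
  proof (rule ccontr)
    assume "h (x + t *\<^sub>R e) \<noteq> 0"
    then have "x + t *\<^sub>R e \<in> K" using z by blast
    moreover have "- (t *\<^sub>R e) \<in> cball 0 1" using that ne by simp
    ultimately have "(x + t *\<^sub>R e) + - (t *\<^sub>R e) \<in> S" unfolding S_def by blast
    then show False using that by simp
  qed
  have Ssets: "S \<in> sets lborel" using S by (simp add: compact_imp_closed borel_closed)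
  have Sf: "emeasure lborel S < \<infinity>" using emeasure_bounded_finite[OF compact_imp_bounded[OF S]] by simp
  have wint: "integrable lborel (\<lambda>x. M * indicator S x)"
    using Ssets Sf by (intro integrable_mult_right integrable_indicator) auto
  have der: "((\<lambda>t. h (x + t *\<^sub>R e)) has_real_derivative partial k h (x + s *\<^sub>R e)) (at s)" for x s
  proof -
    have "((\<lambda>t. h ((x + s *\<^sub>R e) + t *\<^sub>R e)) has_real_derivative partial k h (x + s *\<^sub>R e)) (at 0)"
      using partial_has[OF hd] unfolding e_def by blast
    then have "((\<lambda>t. h (x + (t + s) *\<^sub>R e)) has_real_derivative partial k h (x + s *\<^sub>R e)) (at 0)"
      by (simp add: algebra_simps scaleR_add_left)
    then show ?thesis using DERIV_shift[of "\<lambda>t. h (x + t *\<^sub>R e)" _ 0 s] by simp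
  qed
  have bound: "norm (q n x) \<le> M * indicator S x" for n x
  proof -
    define t where "t = 1 / (real n + 1)"
    have t: "0 < t" "t \<le> 1" unfolding t_def by (auto simp: field_simps)
    show ?thesis
    proof (cases "x \<in> S")
      case False
      then have "x \<notin> K" using KS by auto
      then show ?thesis using False shiftz[OF False, of t] t z
        by (simp add: q_def t_def[symmetric] indicator_def)
    next
      case True
      obtain c where c: "0 < c" "c < t" "h (x + t *\<^sub>R e) - h (x + 0 *\<^sub>R e) = (t - 0) * partial k h (x + c *\<^sub>R e)"
        using MVT2[OF t(1), of "\<lambda>s. h (x + s *\<^sub>R e)" "\<lambda>s. partial k h (x + s *\<^sub>R e)"] der by blast
      obtain y w where yw: "x = y + w" "y \<in> K" "w \<in> cball 0 1" using True unfolding S_def by blast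
      have "norm (w + c *\<^sub>R e) \<le> 2"
        using yw(3) c t ne norm_triangle_ineq[of w "c *\<^sub>R e"] by simp
      moreover have "x + c *\<^sub>R e = y + (w + c *\<^sub>R e)" using yw by simp
      ultimately have "x + c *\<^sub>R e \<in> S2" unfolding S2_def mem_Collect_eq using yw(2)
        by (intro exI[of _ y] exI[of _ "w + c *\<^sub>R e"]) (auto simp: mem_cball_0)
      then have "\<bar>partial k h (x + c *\<^sub>R e)\<bar> \<le> M" by (rule M)
      moreover have "q n x = partial k h (x + c *\<^sub>R e)"
        using c t unfolding q_def t_def[symmetric] by simp
      ultimately show ?thesis using True by simp
    qed
  qed
  have meas: "q n \<in> borel_measurable lborel" for n
    unfolding q_def by (simp, intro borel_measurable_continuous_onI continuous_intros continuous_on_compose2[OF hc]) auto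
  have pmeas: "partial k h \<in> borel_measurable lborel" using pc by (simp add: borel_measurable_continuous_onI)
  have lim: "(\<lambda>n. q n x) \<longlonglongrightarrow> partial k h x" for x
  proof -
    have d: "((\<lambda>t. h (x + t *\<^sub>R e)) has_real_derivative partial k h x) (at 0)" using der[of x 0] by simp
    then have l: "((\<lambda>t. (h (x + t *\<^sub>R e) - h x) / t) \<longlongrightarrow> partial k h x) (at 0)"
      unfolding DERIV_def by simp
    have f: "filterlim (\<lambda>n::nat. 1 / (real n + 1)) (at (0::real)) sequentially"
    proof -
      have eq: "(\<lambda>n::nat. 1 / (real n + 1)) = (\<lambda>n. inverse (real (Suc n)))"
        by (auto simp: fun_eq_iff inverse_eq_divide)
      show ?thesis unfolding filterlim_at eq using LIMSEQ_inverse_real_of_nat by auto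
    qed
    show ?thesis using filterlim_compose[OF l f] unfolding q_def by simp
  qed
  show int: "integrable lborel (partial k h)"
    by (rule integrable_dominated_convergence[where s=q, OF pmeas meas wint]) (use lim bound in auto)
  have conv: "(\<lambda>n. integral\<^sup>L lborel (q n)) \<longlonglongrightarrow> integral\<^sup>L lborel (partial k h)"
    by (rule integral_dominated_convergence[where s=q, OF pmeas meas wint]) (use lim bound in auto)
  have hint: "integrable lborel h" by (rule integrable_cs[OF hc K z])
  have q0: "integral\<^sup>L lborel (q n) = 0" for n
  proof -
    define t where "t = 1 / (real n + 1)"
    have t: "0 < t" "t \<le> 1" unfolding t_def by (auto simp: field_simps)
    have hsc: "continuous_on UNIV (\<lambda>x. h (x + t *\<^sub>R e))"
      by (intro continuous_on_compose2[OF hc] continuous_intros) auto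
    have hsz: "h (x + t *\<^sub>R e) = 0" if "x \<notin> S" for x using shiftz[OF that] t by simp
    have hsint: "integrable lborel (\<lambda>x. h (x + t *\<^sub>R e))" by (rule integrable_cs[OF hsc S hsz])
    have hm: "h \<in> borel_measurable borel" using hc by (simp add: borel_measurable_continuous_onI)
    have "integral\<^sup>L lborel h = integral\<^sup>L (distr lborel borel ((+) (t *\<^sub>R e))) h"
      by (simp add: lborel_distr_plus)
    also have "\<dots> = integral\<^sup>L lborel (\<lambda>x. h (t *\<^sub>R e + x))"
      by (rule integral_distr) (auto simp: hm)
    finally have tr: "integral\<^sup>L lborel (\<lambda>x. h (x + t *\<^sub>R e)) = integral\<^sup>L lborel h"
      by (simp add: add.commute)
    have "integral\<^sup>L lborel (q n) = integral\<^sup>L lborel (\<lambda>x. (h (x + t *\<^sub>R e) - h x) / t)"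
      unfolding q_def t_def by simp
    also have "\<dots> = (integral\<^sup>L lborel (\<lambda>x. h (x + t *\<^sub>R e)) - integral\<^sup>L lborel h) / t"
      using hsint hint by simp
    also have "\<dots> = 0" using tr by simp
    finally show ?thesis .
  qed
  show "integral\<^sup>L lborel (partial k h) = 0"
    using conv unfolding q0 by (simp add: LIMSEQ_const_iff)
qed



lemma partial_mult_fun:
  assumes "smooth f" "smooth g"
  shows "partial k (\<lambda>x. f x * g x) = (\<lambda>x. partial k f x * g x + f x * partial k g x)"
  using partial_mult(1)[OF smooth_diffk[OF assms(1)] smooth_diffk[OF assms(2)]] by (auto simp: fun_eq_iff)

lemma partial_partial_mult:
  assumes f: "smooth f" and g: "smooth g"
  shows "partial k (partial k (\<lambda>x. f x * g x)) x =
     partial k (partial k f) x * g x + 2 * (partial k f x * partial k g x) + f x * partial k (partial k g) x"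
proof -
  have s1: "smooth (\<lambda>x. partial k f x * g x)" by (intro smooth_mult smooth_partial f g)
  have s2: "smooth (\<lambda>x. f x * partial k g x)" by (intro smooth_mult smooth_partial f g)
  have "partial k (partial k (\<lambda>x. f x * g x)) x =
     partial k (\<lambda>x. partial k f x * g x) x + partial k (\<lambda>x. f x * partial k g x) x"
    unfolding partial_mult_fun[OF f g] by (rule partial_add(1)[OF smooth_diffk[OF s1] smooth_diffk[OF s2]])
  also have "\<dots> = partial k (partial k f) x * g x + 2 * (partial k f x * partial k g x) + f x * partial k (partial k g) x"
    unfolding partial_mult_fun[OF smooth_partial[OF f] g] partial_mult_fun[OF f smooth_partial[OF g]]
    by simp
  finally show ?thesis .
qed

lemma lap_mult:
  assumes f: "smooth f" and g: "smooth g"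
  shows "laplacian (\<lambda>x. f x * g x) x = laplacian f x * g x
     + 2 * (\<Sum>k\<in>UNIV. partial k f x * partial k g x) + f x * laplacian g x"
  unfolding laplacian_def partial_partial_mult[OF f g]
  by (simp add: sum.distrib sum_distrib_left sum_distrib_right)

lemma ibp_sum:
  fixes A B :: "'n::finite \<Rightarrow> real^'n \<Rightarrow> real"
  assumes A: "\<And>k. smooth (A k)" and B: "\<And>k. smooth (B k)" and K: "compact K"
    and z: "\<And>k y. y \<notin> K \<Longrightarrow> B k y = 0"
  shows "integrable lborel (\<lambda>x. \<Sum>k\<in>UNIV. partial k (A k) x * B k x)"
    "integrable lborel (\<lambda>x. \<Sum>k\<in>UNIV. A k x * partial k (B k) x)"
    "integral\<^sup>L lborel (\<lambda>x. \<Sum>k\<in>UNIV. partial k (A k) x * B k x)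
      = - integral\<^sup>L lborel (\<lambda>x. \<Sum>k\<in>UNIV. A k x * partial k (B k) x)"
proof -
  have Kc: "closed K" using K by (rule compact_imp_closed)
  have i1: "integrable lborel (\<lambda>x. partial k (A k) x * B k x)" for k
    by (rule integrable_cs[OF smooth_cont K]) (auto intro!: smooth_mult smooth_partial A B simp: z)
  have zp: "partial k (B k) y = 0" if "y \<notin> K" for k y
    by (rule partial_zero_outside[OF Kc z that])
  have i2: "integrable lborel (\<lambda>x. A k x * partial k (B k) x)" for k
    by (rule integrable_cs[OF smooth_cont K]) (auto intro!: smooth_mult smooth_partial A B simp: zp)
  have e: "integral\<^sup>L lborel (\<lambda>x. partial k (A k) x * B k x) = - integral\<^sup>L lborel (\<lambda>x. A k x * partial k (B k) x)" for k
  proof -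
    have s: "smooth (\<lambda>x. A k x * B k x)" by (intro smooth_mult A B)
    have "integral\<^sup>L lborel (partial k (\<lambda>x. A k x * B k x)) = 0"
      by (rule int_partial_zero(2)[OF smooth_cont[OF s] smooth_diffk[OF s] smooth_cont[OF smooth_partial[OF s]] K])
        (simp add: z)
    then have "integral\<^sup>L lborel (\<lambda>x. partial k (A k) x * B k x + A k x * partial k (B k) x) = 0"
      unfolding partial_mult_fun[OF A B] .
    then show ?thesis using i1 i2 by simp
  qed
  show "integrable lborel (\<lambda>x. \<Sum>k\<in>UNIV. partial k (A k) x * B k x)" using i1 by simp
  show "integrable lborel (\<lambda>x. \<Sum>k\<in>UNIV. A k x * partial k (B k) x)" using i2 by simp
  show "integral\<^sup>L lborel (\<lambda>x. \<Sum>k\<in>UNIV. partial k (A k) x * B k x)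
      = - integral\<^sup>L lborel (\<lambda>x. \<Sum>k\<in>UNIV. A k x * partial k (B k) x)"
    using i1 i2 e by (simp add: integral_sum sum_negf)
qed

lemma green:
  fixes a b :: "real^'n::finite \<Rightarrow> real"
  assumes a: "smooth a" and b: "smooth b" and K: "compact K" and z: "\<And>y. y \<notin> K \<Longrightarrow> b y = 0"
  shows "integral\<^sup>L lborel (\<lambda>x. laplacian a x * b x) = integral\<^sup>L lborel (\<lambda>x. a x * laplacian b x)"
proof -
  have Kc: "closed K" using K by (rule compact_imp_closed)
  have zp: "partial k b y = 0" if "y \<notin> K" for k y
    by (rule partial_zero_outside[OF Kc z that])
  have "integral\<^sup>L lborel (\<lambda>x. \<Sum>k\<in>UNIV. partial k (partial k a) x * b x)
      = - integral\<^sup>L lborel (\<lambda>x. \<Sum>k\<in>UNIV. partial k a x * partial k b x)"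
    using ibp_sum(3)[of "\<lambda>k. partial k a" "\<lambda>k. b", OF smooth_partial[OF a] b K z] by simp
  also have "integral\<^sup>L lborel (\<lambda>x. \<Sum>k\<in>UNIV. partial k a x * partial k b x)
      = - integral\<^sup>L lborel (\<lambda>x. \<Sum>k\<in>UNIV. a x * partial k (partial k b) x)"
    using ibp_sum(3)[of "\<lambda>k. a" "\<lambda>k. partial k b", OF a smooth_partial[OF b] K zp] by simp
  finally show ?thesis
    unfolding laplacian_def by (simp add: sum_distrib_right sum_distrib_left)
qed



lemma smooth_diff: "smooth f \<Longrightarrow> smooth g \<Longrightarrow> smooth (\<lambda>x. f x - g x)"
proof -
  assume f: "smooth f" and g: "smooth g"
  have "smooth (\<lambda>x. f x + (-1) * g x)" by (intro smooth_add smooth_mult smooth_const f g)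
  then show ?thesis by simp
qed

lemma comp:
  fixes a \<zeta> :: "real^'n::finite \<Rightarrow> real" and K
  assumes sa: "smooth a" and sz: "smooth \<zeta>" and K: "compact K" and zz: "\<And>y. y \<notin> K \<Longrightarrow> \<zeta> y = 0"
    and w_def: "w = laplacian a" and D_def: "D = laplacian \<zeta>"
    and P_def: "P = (\<lambda>x. \<Sum>k\<in>UNIV. partial k \<zeta> x * partial k \<zeta> x)"
    and Q_def: "Q = laplacian P"
    and T_def: "T = (\<lambda>x. \<Sum>k\<in>UNIV. partial k D x * partial k \<zeta> x)"
    and G_def: "G = (\<lambda>x. \<Sum>k\<in>UNIV. partial k a x * partial k \<zeta> x)"
  shows
   "integral\<^sup>L lborel (\<lambda>x. laplacian w x * (a x * (\<zeta> x * \<zeta> x))) =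
      integral\<^sup>L lborel (\<lambda>x. w x * w x * (\<zeta> x * \<zeta> x)) + 4 * integral\<^sup>L lborel (\<lambda>x. \<zeta> x * w x * G x)
      + 2 * integral\<^sup>L lborel (\<lambda>x. a x * w x * \<zeta> x * D x) + 2 * integral\<^sup>L lborel (\<lambda>x. a x * w x * P x)"
   "integral\<^sup>L lborel (\<lambda>x. (laplacian (\<lambda>x. a x * \<zeta> x) x)\<^sup>2) =
      integral\<^sup>L lborel (\<lambda>x. w x * w x * (\<zeta> x * \<zeta> x)) + 4 * integral\<^sup>L lborel (\<lambda>x. G x * G x)
      + integral\<^sup>L lborel (\<lambda>x. a x * a x * (D x * D x)) + 4 * integral\<^sup>L lborel (\<lambda>x. \<zeta> x * w x * G x)
      + 2 * integral\<^sup>L lborel (\<lambda>x. a x * w x * \<zeta> x * D x) + 4 * integral\<^sup>L lborel (\<lambda>x. a x * D x * G x)"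
   "2 * integral\<^sup>L lborel (\<lambda>x. a x * D x * G x) = - integral\<^sup>L lborel (\<lambda>x. a x * a x * (T x + D x * D x))"
   "integral\<^sup>L lborel (\<lambda>x. G x * G x) \<le> - integral\<^sup>L lborel (\<lambda>x. a x * w x * P x)
      + 1/2 * integral\<^sup>L lborel (\<lambda>x. a x * a x * Q x)"
   "- 4 * integral\<^sup>L lborel (\<lambda>x. \<zeta> x * w x * G x) \<le> 1/4 * integral\<^sup>L lborel (\<lambda>x. w x * w x * (\<zeta> x * \<zeta> x))
      + 16 * integral\<^sup>L lborel (\<lambda>x. G x * G x)"
   "- 2 * integral\<^sup>L lborel (\<lambda>x. a x * w x * \<zeta> x * D x) \<le> 1/4 * integral\<^sup>L lborel (\<lambda>x. w x * w x * (\<zeta> x * \<zeta> x))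
      + 4 * integral\<^sup>L lborel (\<lambda>x. a x * a x * (D x * D x))"
proof -
  have Kc: "closed K" using K by (rule compact_imp_closed)
  have icK: "integrable lborel f" if "smooth f" "\<And>y. y \<notin> K \<Longrightarrow> f y = 0" for f
    by (rule integrable_cs[OF smooth_cont[OF that(1)] K that(2)])
  have sw: "smooth w" unfolding w_def by (intro smooth_laplacian sa)
  have sD: "smooth D" unfolding D_def by (intro smooth_laplacian sz)
  have sP: "smooth P" unfolding P_def by (intro smooth_sum smooth_mult smooth_partial sz)
  have sQ: "smooth Q" unfolding Q_def by (intro smooth_laplacian sP)
  have sG: "smooth G" unfolding G_def by (intro smooth_sum smooth_mult smooth_partial sz sa)
  have sT: "smooth T" unfolding T_def by (intro smooth_sum smooth_mult smooth_partial sz sD)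
  have z1: "partial k \<zeta> y = 0" if "y \<notin> K" for k y by (rule partial_zero_outside[OF Kc zz that])
  have z2: "partial j (partial k \<zeta>) y = 0" if "y \<notin> K" for j k y by (rule partial_zero_outside[OF Kc z1 that])
  have zD: "D y = 0" if "y \<notin> K" for y unfolding D_def laplacian_def using z2[OF that] by simp
  have zD1: "partial k D y = 0" if "y \<notin> K" for k y by (rule partial_zero_outside[OF Kc zD that])
  have zP: "P y = 0" if "y \<notin> K" for y unfolding P_def using z1[OF that] by simp
  have zP1: "partial k P y = 0" if "y \<notin> K" for k y by (rule partial_zero_outside[OF Kc zP that])
  have zP2: "partial j (partial k P) y = 0" if "y \<notin> K" for j k y by (rule partial_zero_outside[OF Kc zP1 that])
  have zQ: "Q y = 0" if "y \<notin> K" for y unfolding Q_def laplacian_def using zP2[OF that] by simp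
  have zG: "G y = 0" if "y \<notin> K" for y unfolding G_def using z1[OF that] by simp
  have zT: "T y = 0" if "y \<notin> K" for y unfolding T_def using z1[OF that] by simp
  note zs = zz z1 z2 zD zD1 zP zP1 zP2 zQ zG zT
  note ss = smooth_mult smooth_add smooth_diff smooth_sum smooth_partial smooth_const sa sz sw sD sP sQ sG sT
  have iW: "integrable lborel (\<lambda>x. w x * w x * (\<zeta> x * \<zeta> x))" by (rule icK) (auto intro!: ss simp: zs)
  have iA: "integrable lborel (\<lambda>x. \<zeta> x * w x * G x)" by (rule icK) (auto intro!: ss simp: zs)
  have iB: "integrable lborel (\<lambda>x. a x * w x * \<zeta> x * D x)" by (rule icK) (auto intro!: ss simp: zs)
  have iC: "integrable lborel (\<lambda>x. a x * w x * P x)" by (rule icK) (auto intro!: ss simp: zs)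
  have iG2: "integrable lborel (\<lambda>x. G x * G x)" by (rule icK) (auto intro!: ss simp: zs)
  have iA2: "integrable lborel (\<lambda>x. a x * a x * (D x * D x))" by (rule icK) (auto intro!: ss simp: zs)
  have iADG: "integrable lborel (\<lambda>x. a x * D x * G x)" by (rule icK) (auto intro!: ss simp: zs)
  have iAQ: "integrable lborel (\<lambda>x. a x * a x * Q x)" by (rule icK) (auto intro!: ss simp: zs)
  have pz2: "partial k (\<lambda>x. \<zeta> x * \<zeta> x) x = 2 * (\<zeta> x * partial k \<zeta> x)" for k x
    unfolding partial_mult_fun[OF sz sz] by simp
  have lz2: "laplacian (\<lambda>x. \<zeta> x * \<zeta> x) x = 2 * (\<zeta> x * D x) + 2 * P x" for x
    unfolding lap_mult[OF sz sz] D_def P_def by simp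
  have sumG: "(\<Sum>k\<in>UNIV. partial k a x * (2 * (\<zeta> x * partial k \<zeta> x))) = 2 * \<zeta> x * G x" for x
    unfolding G_def sum_distrib_left by (rule sum.cong) (auto simp: algebra_simps)
  have pt1: "laplacian (\<lambda>x. a x * (\<zeta> x * \<zeta> x)) x = w x * (\<zeta> x * \<zeta> x) + 4 * (\<zeta> x * G x) + a x * (2 * (\<zeta> x * D x) + 2 * P x)" for x
    unfolding lap_mult[OF sa smooth_mult[OF sz sz]] pz2 lz2 sumG w_def by simp
  have "integral\<^sup>L lborel (\<lambda>x. laplacian w x * (a x * (\<zeta> x * \<zeta> x))) =
      integral\<^sup>L lborel (\<lambda>x. w x * laplacian (\<lambda>x. a x * (\<zeta> x * \<zeta> x)) x)"
    by (rule green[OF sw smooth_mult[OF sa smooth_mult[OF sz sz]] K]) (simp add: zz)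
  also have "\<dots> = integral\<^sup>L lborel (\<lambda>x. w x * w x * (\<zeta> x * \<zeta> x) + 4 * (\<zeta> x * w x * G x)
      + 2 * (a x * w x * \<zeta> x * D x) + 2 * (a x * w x * P x))"
    unfolding pt1 by (rule Bochner_Integration.integral_cong) (auto simp: algebra_simps)
  also have "\<dots> = integral\<^sup>L lborel (\<lambda>x. w x * w x * (\<zeta> x * \<zeta> x)) + 4 * integral\<^sup>L lborel (\<lambda>x. \<zeta> x * w x * G x)
      + 2 * integral\<^sup>L lborel (\<lambda>x. a x * w x * \<zeta> x * D x) + 2 * integral\<^sup>L lborel (\<lambda>x. a x * w x * P x)"
    using iW iA iB iC by simp
  finally show "integral\<^sup>L lborel (\<lambda>x. laplacian w x * (a x * (\<zeta> x * \<zeta> x))) =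
      integral\<^sup>L lborel (\<lambda>x. w x * w x * (\<zeta> x * \<zeta> x)) + 4 * integral\<^sup>L lborel (\<lambda>x. \<zeta> x * w x * G x)
      + 2 * integral\<^sup>L lborel (\<lambda>x. a x * w x * \<zeta> x * D x) + 2 * integral\<^sup>L lborel (\<lambda>x. a x * w x * P x)" .
  have pt2: "laplacian (\<lambda>x. a x * \<zeta> x) x = w x * \<zeta> x + 2 * G x + a x * D x" for x
    unfolding lap_mult[OF sa sz] w_def G_def D_def by simp
  have "integral\<^sup>L lborel (\<lambda>x. (laplacian (\<lambda>x. a x * \<zeta> x) x)\<^sup>2) =
     integral\<^sup>L lborel (\<lambda>x. w x * w x * (\<zeta> x * \<zeta> x) + 4 * (G x * G x) + a x * a x * (D x * D x)
      + 4 * (\<zeta> x * w x * G x) + 2 * (a x * w x * \<zeta> x * D x) + 4 * (a x * D x * G x))"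
    unfolding pt2 by (rule Bochner_Integration.integral_cong) (auto simp: algebra_simps power2_eq_square)
  also have "\<dots> = integral\<^sup>L lborel (\<lambda>x. w x * w x * (\<zeta> x * \<zeta> x)) + 4 * integral\<^sup>L lborel (\<lambda>x. G x * G x)
      + integral\<^sup>L lborel (\<lambda>x. a x * a x * (D x * D x)) + 4 * integral\<^sup>L lborel (\<lambda>x. \<zeta> x * w x * G x)
      + 2 * integral\<^sup>L lborel (\<lambda>x. a x * w x * \<zeta> x * D x) + 4 * integral\<^sup>L lborel (\<lambda>x. a x * D x * G x)"
    using iW iG2 iA2 iA iB iADG by simp
  finally show "integral\<^sup>L lborel (\<lambda>x. (laplacian (\<lambda>x. a x * \<zeta> x) x)\<^sup>2) =
      integral\<^sup>L lborel (\<lambda>x. w x * w x * (\<zeta> x * \<zeta> x)) + 4 * integral\<^sup>L lborel (\<lambda>x. G x * G x)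
      + integral\<^sup>L lborel (\<lambda>x. a x * a x * (D x * D x)) + 4 * integral\<^sup>L lborel (\<lambda>x. \<zeta> x * w x * G x)
      + 2 * integral\<^sup>L lborel (\<lambda>x. a x * w x * \<zeta> x * D x) + 4 * integral\<^sup>L lborel (\<lambda>x. a x * D x * G x)" .
  have pa2: "partial k (\<lambda>x. a x * a x) x = 2 * (a x * partial k a x)" for k x
    unfolding partial_mult_fun[OF sa sa] by simp
  have e3: "integral\<^sup>L lborel (\<lambda>x. \<Sum>k\<in>UNIV. partial k (\<lambda>x. a x * a x) x * (D x * partial k \<zeta> x))
    = - integral\<^sup>L lborel (\<lambda>x. \<Sum>k\<in>UNIV. a x * a x * partial k (\<lambda>x. D x * partial k \<zeta> x) x)"
    using ibp_sum(3)[of "\<lambda>k x. a x * a x" "\<lambda>k x. D x * partial k \<zeta> x", OF _ _ K]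
    by (auto intro!: ss simp: zs)
  have l3: "(\<Sum>k\<in>UNIV. partial k (\<lambda>x. a x * a x) x * (D x * partial k \<zeta> x)) = 2 * (a x * D x * G x)" for x
    unfolding pa2 G_def sum_distrib_left by (rule sum.cong) (auto simp: algebra_simps)
  have r3: "(\<Sum>k\<in>UNIV. a x * a x * partial k (\<lambda>x. D x * partial k \<zeta> x) x) = a x * a x * (T x + D x * D x)" for x
  proof -
    have "(\<Sum>k\<in>UNIV. a x * a x * partial k (\<lambda>x. D x * partial k \<zeta> x) x) =
      a x * a x * (\<Sum>k\<in>UNIV. partial k D x * partial k \<zeta> x) + a x * a x * D x * (\<Sum>k\<in>UNIV. partial k (partial k \<zeta>) x)"
      unfolding partial_mult_fun[OF sD smooth_partial[OF sz]]
      by (simp add: sum_distrib_left sum.distrib algebra_simps)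
    moreover have "(\<Sum>k\<in>UNIV. partial k (partial k \<zeta>) x) = D x" unfolding D_def laplacian_def ..
    ultimately show ?thesis unfolding T_def by (simp add: algebra_simps)
  qed
  show "2 * integral\<^sup>L lborel (\<lambda>x. a x * D x * G x) = - integral\<^sup>L lborel (\<lambda>x. a x * a x * (T x + D x * D x))"
    using e3 unfolding l3 r3 by simp
  have e4a: "integral\<^sup>L lborel (\<lambda>x. \<Sum>k\<in>UNIV. partial k a x * (partial k a x * P x))
    = - integral\<^sup>L lborel (\<lambda>x. \<Sum>k\<in>UNIV. a x * partial k (\<lambda>x. partial k a x * P x) x)"
    using ibp_sum(3)[of "\<lambda>k. a" "\<lambda>k x. partial k a x * P x", OF _ _ K]
    by (auto intro!: ss simp: zs)
  have e4b: "integral\<^sup>L lborel (\<lambda>x. \<Sum>k\<in>UNIV. partial k (\<lambda>x. a x * a x) x * partial k P x)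
    = - integral\<^sup>L lborel (\<lambda>x. \<Sum>k\<in>UNIV. a x * a x * partial k (partial k P) x)"
    using ibp_sum(3)[of "\<lambda>k x. a x * a x" "\<lambda>k. partial k P", OF _ _ K]
    by (auto intro!: ss simp: zs)
  define AG where "AG = (\<lambda>x. \<Sum>k\<in>UNIV. partial k a x * partial k P x)"
  define N where "N = (\<lambda>x. \<Sum>k\<in>UNIV. partial k a x * partial k a x)"
  have sAG: "smooth AG" unfolding AG_def by (intro ss)
  have sN: "smooth N" unfolding N_def by (intro ss)
  have iAG: "integrable lborel (\<lambda>x. a x * AG x)" by (rule icK) (auto intro!: ss sAG simp: zs AG_def)
  have iNP: "integrable lborel (\<lambda>x. N x * P x)" by (rule icK) (auto intro!: ss sN simp: zs)
  have l4a: "(\<Sum>k\<in>UNIV. partial k a x * (partial k a x * P x)) = N x * P x" for x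
    unfolding N_def sum_distrib_right by (rule sum.cong) (auto simp: algebra_simps)
  have r4a: "(\<Sum>k\<in>UNIV. a x * partial k (\<lambda>x. partial k a x * P x) x) = a x * w x * P x + a x * AG x" for x
    unfolding partial_mult_fun[OF smooth_partial[OF sa] sP] AG_def w_def laplacian_def
    by (simp add: sum_distrib_left sum_distrib_right sum.distrib algebra_simps)
  have l4b: "(\<Sum>k\<in>UNIV. partial k (\<lambda>x. a x * a x) x * partial k P x) = 2 * (a x * AG x)" for x
    unfolding pa2 AG_def sum_distrib_left by (rule sum.cong) (auto simp: algebra_simps)
  have r4b: "(\<Sum>k\<in>UNIV. a x * a x * partial k (partial k P) x) = a x * a x * Q x" for x
    unfolding Q_def laplacian_def by (simp add: sum_distrib_left)
  have NP: "integral\<^sup>L lborel (\<lambda>x. N x * P x) = - integral\<^sup>L lborel (\<lambda>x. a x * w x * P x)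
      - integral\<^sup>L lborel (\<lambda>x. a x * AG x)"
    using e4a unfolding l4a r4a using iC iAG by simp
  have AGQ: "2 * integral\<^sup>L lborel (\<lambda>x. a x * AG x) = - integral\<^sup>L lborel (\<lambda>x. a x * a x * Q x)"
    using e4b unfolding l4b r4b by simp
  have "integral\<^sup>L lborel (\<lambda>x. G x * G x) \<le> integral\<^sup>L lborel (\<lambda>x. N x * P x)"
  proof (rule integral_mono[OF iG2 iNP])
    fix x show "G x * G x \<le> N x * P x"
      using Cauchy_Schwarz_ineq_sum[of "\<lambda>k. partial k a x" "\<lambda>k. partial k \<zeta> x" UNIV]
      unfolding G_def N_def P_def by (simp add: power2_eq_square)
  qed
  then show "integral\<^sup>L lborel (\<lambda>x. G x * G x) \<le> - integral\<^sup>L lborel (\<lambda>x. a x * w x * P x)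
      + 1/2 * integral\<^sup>L lborel (\<lambda>x. a x * a x * Q x)"
    using NP AGQ by linarith
  have "integral\<^sup>L lborel (\<lambda>x. - 4 * (\<zeta> x * w x * G x)) \<le>
     integral\<^sup>L lborel (\<lambda>x. 1/4 * (w x * w x * (\<zeta> x * \<zeta> x)) + 16 * (G x * G x))"
  proof (rule integral_mono)
    fix x
    have "0 \<le> (1/2 * w x * \<zeta> x + 4 * G x)\<^sup>2" by simp
    then show "- 4 * (\<zeta> x * w x * G x) \<le> 1/4 * (w x * w x * (\<zeta> x * \<zeta> x)) + 16 * (G x * G x)"
      by (simp add: power2_eq_square algebra_simps)
  qed (use iA iW iG2 in auto)
  then show "- 4 * integral\<^sup>L lborel (\<lambda>x. \<zeta> x * w x * G x) \<le> 1/4 * integral\<^sup>L lborel (\<lambda>x. w x * w x * (\<zeta> x * \<zeta> x))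
      + 16 * integral\<^sup>L lborel (\<lambda>x. G x * G x)"
    using iW iG2 by simp
  have "integral\<^sup>L lborel (\<lambda>x. - 2 * (a x * w x * \<zeta> x * D x)) \<le>
     integral\<^sup>L lborel (\<lambda>x. 1/4 * (w x * w x * (\<zeta> x * \<zeta> x)) + 4 * (a x * a x * (D x * D x)))"
  proof (rule integral_mono)
    fix x
    have "0 \<le> (1/2 * w x * \<zeta> x + 2 * a x * D x)\<^sup>2" by simp
    then show "- 2 * (a x * w x * \<zeta> x * D x) \<le> 1/4 * (w x * w x * (\<zeta> x * \<zeta> x)) + 4 * (a x * a x * (D x * D x))"
      by (simp add: power2_eq_square algebra_simps)
  qed (use iB iW iA2 in auto)
  then show "- 2 * integral\<^sup>L lborel (\<lambda>x. a x * w x * \<zeta> x * D x) \<le> 1/4 * integral\<^sup>L lborel (\<lambda>x. w x * w x * (\<zeta> x * \<zeta> x))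
      + 4 * integral\<^sup>L lborel (\<lambda>x. a x * a x * (D x * D x))"
    using iW iA2 by simp
qed



lemma normsq: "(norm (x::real^'m::finite))\<^sup>2 = (\<Sum>i\<in>UNIV. x$i * x$i)"
  by (simp add: power2_norm_eq_inner inner_vec_def)

lemma grad_normsq: "(norm (grad f x))\<^sup>2 = (\<Sum>k\<in>UNIV. partial k f x * partial k f x)"
  unfolding normsq grad_def by simp

lemma powr_comb1:
  assumes "(0::real) \<le> r" shows "r powr (p - 1) * r\<^sup>2 = r powr (p + 1)"
proof (cases "r = 0")
  case False
  then have "r > 0" using assms by simp
  then have "r\<^sup>2 = r powr 2" by (simp add: powr_realpow[of r 2, simplified])
  then have "r powr (p - 1) * r\<^sup>2 = r powr ((p - 1) + 2)" by (simp only: powr_add)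
  also have "(p - 1) + 2 = p + 1" by simp
  finally show ?thesis .
qed simp

lemma powr_comb2:
  assumes "(0::real) \<le> r" shows "r powr (p - 3) * (r\<^sup>2 * r\<^sup>2) = r powr (p + 1)"
proof (cases "r = 0")
  case False
  then have "r > 0" using assms by simp
  then have "r\<^sup>2 * r\<^sup>2 = r powr 4" by (simp add: powr_realpow[of r 4, simplified] power2_eq_square power4_eq_xxxx)
  then have "r powr (p - 3) * (r\<^sup>2 * r\<^sup>2) = r powr ((p - 3) + 4)" by (simp only: powr_add)
  also have "(p - 3) + 4 = p + 1" by simp
  finally show ?thesis .
qed simp

lemma cont_vec:
  assumes "\<And>i. continuous_on UNIV (\<lambda>x. f x $ i)"
  shows "continuous_on UNIV (f :: 'a::topological_space \<Rightarrow> real^'m::finite)"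
proof -
  have "continuous_on UNIV (\<lambda>x. \<chi> i. f x $ i)" by (intro continuous_on_vec_lambda assms)
  then show ?thesis by simp
qed

lemma cont_grad: "smooth f \<Longrightarrow> continuous_on UNIV (grad f)"
  unfolding grad_def by (intro cont_vec) (simp add: smooth_cont smooth_partial)



theorem lemma3p2:
  fixes u :: "real^'n \<Rightarrow> real^'m" and p :: real
  assumes p: "p > 1"
    and smooth_u: "\<And>i. smooth (\<lambda>x. u x $ i)"
    and eq: "\<And>i x. laplacian (laplacian (\<lambda>y. u y $ i)) x = norm (u x) powr (p - 1) * (u x $ i)"
    and stab: "stable p u"
  defines "w \<equiv> \<lambda>x. (\<chi> i. laplacian (\<lambda>y. u y $ i) x)"
  shows "\<exists>C>0. \<forall>\<zeta>. test_fun \<zeta> \<longrightarrow>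
    (\<integral>x. ((norm (w x))\<^sup>2 + norm (u x) powr (p + 1)) * (\<zeta> x)\<^sup>2 \<partial>lborel)
    \<le> C * (\<integral>x. (norm (u x))\<^sup>2 * (norm (grad (laplacian \<zeta>) x) * norm (grad \<zeta> x)
              + (laplacian \<zeta> x)\<^sup>2 + \<bar>laplacian (\<lambda>y. (norm (grad \<zeta> y))\<^sup>2) x\<bar>) \<partial>lborel)
      + C * (\<integral>x. norm (u x) * norm (w x) * (norm (grad \<zeta> x))\<^sup>2 \<partial>lborel)"
proof -
  define k where "k = 1 / (p - 1)"
  have kpos: "k > 0" using p by (simp add: k_def)
  define C where "C = 36 + 18 * k"
  have Cpos: "C > 0" using kpos by (simp add: C_def)
  have cu: "continuous_on UNIV u" by (intro cont_vec smooth_cont smooth_u)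
  have cw: "continuous_on UNIV w" unfolding w_def by (intro cont_vec) (simp add: smooth_cont smooth_laplacian smooth_u)
  have wi: "w x $ i = laplacian (\<lambda>y. u y $ i) x" for x i by (simp add: w_def)
  have cpow: "continuous_on UNIV (\<lambda>x. norm (u x) powr q)" if "q > 0" for q
    using continuous_on_powr'[of UNIV "\<lambda>x. norm (u x)" "\<lambda>x. q"] continuous_on_norm[OF cu] that by auto
  have main: "(\<integral>x. ((norm (w x))\<^sup>2 + norm (u x) powr (p + 1)) * (\<zeta> x)\<^sup>2 \<partial>lborel)
    \<le> C * (\<integral>x. (norm (u x))\<^sup>2 * (norm (grad (laplacian \<zeta>) x) * norm (grad \<zeta> x)
              + (laplacian \<zeta> x)\<^sup>2 + \<bar>laplacian (\<lambda>y. (norm (grad \<zeta> y))\<^sup>2) x\<bar>) \<partial>lborel)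
      + C * (\<integral>x. norm (u x) * norm (w x) * (norm (grad \<zeta> x))\<^sup>2 \<partial>lborel)"
    if tz: "test_fun \<zeta>" for \<zeta>
  proof -
    define K where "K = closure {x. \<zeta> x \<noteq> 0}"
    have K: "compact K" and sz: "smooth \<zeta>" using tz unfolding test_fun_def K_def by auto
    have Kc: "closed K" unfolding K_def by (rule closed_closure)
    have zz: "\<zeta> y = 0" if "y \<notin> K" for y using that closure_subset[of "{x. \<zeta> x \<noteq> 0}"] unfolding K_def by blast
    have icK: "integrable lborel f" if "continuous_on UNIV f" "\<And>y. y \<notin> K \<Longrightarrow> f y = 0" for f :: "real^'n \<Rightarrow> real"
      by (rule integrable_cs[OF that(1) K that(2)])
    define a where "a = (\<lambda>i y. u y $ i)"
    have sa: "smooth (a i)" for i unfolding a_def by (rule smooth_u)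
    define D where "D = laplacian \<zeta>"
    define P where "P = (\<lambda>x. \<Sum>k\<in>UNIV. partial k \<zeta> x * partial k \<zeta> x)"
    define Q where "Q = laplacian P"
    define T where "T = (\<lambda>x. \<Sum>k\<in>UNIV. partial k D x * partial k \<zeta> x)"
    define G where "G = (\<lambda>i x. \<Sum>k\<in>UNIV. partial k (a i) x * partial k \<zeta> x)"
    define wf where "wf = (\<lambda>i. laplacian (a i))"
    note CP = comp[OF sa sz K zz wf_def[THEN fun_cong] D_def P_def Q_def T_def G_def[THEN fun_cong]]
    have icS: "integrable lborel f" if "smooth f" "\<And>y. y \<notin> K \<Longrightarrow> f y = 0" for f :: "real^'n \<Rightarrow> real"
      by (rule icK[OF smooth_cont[OF that(1)] that(2)])
    have sw: "smooth (wf i)" for i unfolding wf_def by (intro smooth_laplacian sa)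
    have sD: "smooth D" unfolding D_def by (intro smooth_laplacian sz)
    have sP: "smooth P" unfolding P_def by (intro smooth_sum smooth_mult smooth_partial sz)
    have sQ: "smooth Q" unfolding Q_def by (intro smooth_laplacian sP)
    have sG: "smooth (G i)" for i unfolding G_def by (intro smooth_sum smooth_mult smooth_partial sz sa)
    have sT: "smooth T" unfolding T_def by (intro smooth_sum smooth_mult smooth_partial sz sD)
    have z1: "partial k \<zeta> y = 0" if "y \<notin> K" for k y by (rule partial_zero_outside[OF Kc zz that])
    have z2: "partial j (partial k \<zeta>) y = 0" if "y \<notin> K" for j k y by (rule partial_zero_outside[OF Kc z1 that])
    have zD: "D y = 0" if "y \<notin> K" for y unfolding D_def laplacian_def using z2[OF that] by simp
    have zD1: "partial k D y = 0" if "y \<notin> K" for k y by (rule partial_zero_outside[OF Kc zD that])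
    have zP: "P y = 0" if "y \<notin> K" for y unfolding P_def using z1[OF that] by simp
    have zP1: "partial k P y = 0" if "y \<notin> K" for k y by (rule partial_zero_outside[OF Kc zP that])
    have zP2: "partial j (partial k P) y = 0" if "y \<notin> K" for j k y by (rule partial_zero_outside[OF Kc zP1 that])
    have zQ: "Q y = 0" if "y \<notin> K" for y unfolding Q_def laplacian_def using zP2[OF that] by simp
    have zG: "G i y = 0" if "y \<notin> K" for i y unfolding G_def using z1[OF that] by simp
    have zT: "T y = 0" if "y \<notin> K" for y unfolding T_def using z1[OF that] by simp
    have zgr: "grad \<zeta> y = 0" if "y \<notin> K" for y unfolding grad_def using z1[OF that] by (simp add: vec_eq_iff)
    note zs = zz z1 z2 zD zD1 zP zP1 zP2 zQ zG zT zgr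
    note ss = smooth_mult smooth_add smooth_diff smooth_sum smooth_partial smooth_const sa sz sw sD sP sQ sG sT
    have Pn: "P x = (norm (grad \<zeta> x))\<^sup>2" for x unfolding P_def grad_normsq ..
    have PnF: "(\<lambda>y. (norm (grad \<zeta> y))\<^sup>2) = P" using Pn by auto
    have ua: "u x $ i = a i x" for x i by (simp add: a_def)
    have nu: "(norm (u x))\<^sup>2 = (\<Sum>i\<in>UNIV. a i x * a i x)" for x unfolding normsq a_def ..
    have nw: "(norm (w x))\<^sup>2 = (\<Sum>i\<in>UNIV. wf i x * wf i x)" for x unfolding normsq wi wf_def a_def ..

    define I1 where "I1 = (\<lambda>i. \<integral>x. laplacian (wf i) x * (a i x * (\<zeta> x * \<zeta> x)) \<partial>lborel)"
    define S where "S = (\<lambda>i. \<integral>x. (laplacian (\<lambda>x. a i x * \<zeta> x) x)\<^sup>2 \<partial>lborel)"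
    define Wf where "Wf = (\<lambda>i. \<integral>x. wf i x * wf i x * (\<zeta> x * \<zeta> x) \<partial>lborel)"
    define Af where "Af = (\<lambda>i. \<integral>x. \<zeta> x * wf i x * G i x \<partial>lborel)"
    define Bf where "Bf = (\<lambda>i. \<integral>x. a i x * wf i x * \<zeta> x * D x \<partial>lborel)"
    define Cf where "Cf = (\<lambda>i. \<integral>x. a i x * wf i x * P x \<partial>lborel)"
    define G2 where "G2 = (\<lambda>i. \<integral>x. G i x * G i x \<partial>lborel)"
    define A2 where "A2 = (\<lambda>i. \<integral>x. a i x * a i x * (D x * D x) \<partial>lborel)"
    define ADG where "ADG = (\<lambda>i. \<integral>x. a i x * D x * G i x \<partial>lborel)"
    define AT where "AT = (\<lambda>i. \<integral>x. a i x * a i x * (T x + D x * D x) \<partial>lborel)"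
    define AQ where "AQ = (\<lambda>i. \<integral>x. a i x * a i x * Q x \<partial>lborel)"
    have E1: "I1 i = Wf i + 4 * Af i + 2 * Bf i + 2 * Cf i" for i
      unfolding I1_def Wf_def Af_def Bf_def Cf_def by (rule CP(1))
    have E2: "S i = Wf i + 4 * G2 i + A2 i + 4 * Af i + 2 * Bf i + 4 * ADG i" for i
      unfolding S_def Wf_def G2_def A2_def Af_def Bf_def ADG_def by (rule CP(2))
    have E3: "2 * ADG i = - AT i" for i
      unfolding ADG_def AT_def by (rule CP(3))
    have E4: "G2 i \<le> - Cf i + 1/2 * AQ i" for i
      unfolding G2_def Cf_def AQ_def by (rule CP(4))
    have Y1: "- 4 * Af i \<le> 1/4 * Wf i + 16 * G2 i" for i
      unfolding Af_def Wf_def G2_def by (rule CP(5))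
    have Y2: "- 2 * Bf i \<le> 1/4 * Wf i + 4 * A2 i" for i
      unfolding Bf_def Wf_def A2_def by (rule CP(6))
    have sE1: "(\<Sum>i\<in>UNIV. I1 i) = (\<Sum>i\<in>UNIV. Wf i) + 4 * (\<Sum>i\<in>UNIV. Af i) + 2 * (\<Sum>i\<in>UNIV. Bf i) + 2 * (\<Sum>i\<in>UNIV. Cf i)"
      by (simp add: E1 sum.distrib sum_distrib_left)
    have sE2: "(\<Sum>i\<in>UNIV. S i) = (\<Sum>i\<in>UNIV. Wf i) + 4 * (\<Sum>i\<in>UNIV. G2 i) + (\<Sum>i\<in>UNIV. A2 i) + 4 * (\<Sum>i\<in>UNIV. Af i)
       + 2 * (\<Sum>i\<in>UNIV. Bf i) + 4 * (\<Sum>i\<in>UNIV. ADG i)"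
      by (simp add: E2 sum.distrib sum_distrib_left)
    have sE3: "2 * (\<Sum>i\<in>UNIV. ADG i) = - (\<Sum>i\<in>UNIV. AT i)"
      by (simp add: sum_distrib_left E3 sum_negf)
    have "(\<Sum>i\<in>UNIV. G2 i) \<le> (\<Sum>i\<in>UNIV. - Cf i + 1/2 * AQ i)" by (rule sum_mono) (rule E4)
    then have sE4: "(\<Sum>i\<in>UNIV. G2 i) \<le> - (\<Sum>i\<in>UNIV. Cf i) + 1/2 * (\<Sum>i\<in>UNIV. AQ i)"
      by (simp add: sum.distrib sum_distrib_left sum_negf sum_subtractf sum_divide_distrib)
    have "(\<Sum>i\<in>UNIV. - 4 * Af i) \<le> (\<Sum>i\<in>UNIV. 1/4 * Wf i + 16 * G2 i)" by (rule sum_mono) (rule Y1)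
    then have sY1: "- 4 * (\<Sum>i\<in>UNIV. Af i) \<le> 1/4 * (\<Sum>i\<in>UNIV. Wf i) + 16 * (\<Sum>i\<in>UNIV. G2 i)"
      by (simp add: sum.distrib sum_distrib_left)
    have "(\<Sum>i\<in>UNIV. - 2 * Bf i) \<le> (\<Sum>i\<in>UNIV. 1/4 * Wf i + 4 * A2 i)" by (rule sum_mono) (rule Y2)
    then have sY2: "- 2 * (\<Sum>i\<in>UNIV. Bf i) \<le> 1/4 * (\<Sum>i\<in>UNIV. Wf i) + 4 * (\<Sum>i\<in>UNIV. A2 i)"
      by (simp add: sum.distrib sum_distrib_left)
    define U where "U = (\<integral>x. norm (u x) powr (p + 1) * (\<zeta> x)\<^sup>2 \<partial>lborel)"
    define Wt where "Wt = (\<integral>x. (norm (w x))\<^sup>2 * (\<zeta> x)\<^sup>2 \<partial>lborel)"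
    define R1 where "R1 = (\<integral>x. (norm (u x))\<^sup>2 * (norm (grad (laplacian \<zeta>) x) * norm (grad \<zeta> x)
              + (laplacian \<zeta> x)\<^sup>2 + \<bar>laplacian (\<lambda>y. (norm (grad \<zeta> y))\<^sup>2) x\<bar>) \<partial>lborel)"
    define R2 where "R2 = (\<integral>x. norm (u x) * norm (w x) * (norm (grad \<zeta> x))\<^sup>2 \<partial>lborel)"
    have cpw1: "continuous_on UNIV (\<lambda>x. norm (u x) powr (p - 1))" using p by (intro cpow) simp
    have cpw2: "continuous_on UNIV (\<lambda>x. norm (u x) powr (p + 1))" using p by (intro cpow) simp
    have cs: "continuous_on UNIV f" if "smooth f" for f :: "real^'n \<Rightarrow> real" using smooth_cont[OF that] .
    have iU: "integrable lborel (\<lambda>x. norm (u x) powr (p + 1) * (\<zeta> x)\<^sup>2)"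
      by (rule icK) (auto intro!: continuous_intros cpw2 smooth_cont[OF sz] simp: zz)
    have iWt: "integrable lborel (\<lambda>x. (norm (w x))\<^sup>2 * (\<zeta> x)\<^sup>2)"
      by (rule icK) (auto intro!: continuous_intros cw smooth_cont[OF sz] simp: zz)
    have LHS: "(\<integral>x. ((norm (w x))\<^sup>2 + norm (u x) powr (p + 1)) * (\<zeta> x)\<^sup>2 \<partial>lborel) = Wt + U"
    proof -
      have "(\<integral>x. ((norm (w x))\<^sup>2 + norm (u x) powr (p + 1)) * (\<zeta> x)\<^sup>2 \<partial>lborel)
          = (\<integral>x. (norm (w x))\<^sup>2 * (\<zeta> x)\<^sup>2 + norm (u x) powr (p + 1) * (\<zeta> x)\<^sup>2 \<partial>lborel)"
        by (simp add: algebra_simps)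
      also have "\<dots> = Wt + U" unfolding Wt_def U_def using iWt iU by simp
      finally show ?thesis .
    qed
    have iWf: "integrable lborel (\<lambda>x. wf i x * wf i x * (\<zeta> x * \<zeta> x))" for i
      by (rule icS) (auto intro!: ss simp: zs)
    have sWt: "Wt = (\<Sum>i\<in>UNIV. Wf i)"
    proof -
      have "Wt = (\<integral>x. (\<Sum>i\<in>UNIV. wf i x * wf i x * (\<zeta> x * \<zeta> x)) \<partial>lborel)"
        unfolding Wt_def nw by (simp add: sum_distrib_right power2_eq_square)
      also have "\<dots> = (\<Sum>i\<in>UNIV. Wf i)" unfolding Wf_def using iWf by simp
      finally show ?thesis .
    qed
    have iI1: "integrable lborel (\<lambda>x. norm (u x) powr (p - 1) * (a i x * a i x) * (\<zeta> x * \<zeta> x))" for i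
      by (rule icK) (auto intro!: continuous_intros cpw1 smooth_cont[OF sz] smooth_cont[OF sa] simp: zz)
    have sU: "U = (\<Sum>i\<in>UNIV. I1 i)"
    proof -
      have "I1 i = (\<integral>x. norm (u x) powr (p - 1) * (a i x * a i x) * (\<zeta> x * \<zeta> x) \<partial>lborel)" for i
        unfolding I1_def wf_def by (simp add: a_def eq algebra_simps)
      then have "(\<Sum>i\<in>UNIV. I1 i) = (\<integral>x. (\<Sum>i\<in>UNIV. norm (u x) powr (p - 1) * (a i x * a i x) * (\<zeta> x * \<zeta> x)) \<partial>lborel)"
        using iI1 by simp
      also have "\<dots> = U" unfolding U_def
      proof (rule Bochner_Integration.integral_cong[OF refl])
        fix x
        have "(\<Sum>i\<in>UNIV. norm (u x) powr (p - 1) * (a i x * a i x) * (\<zeta> x * \<zeta> x))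
            = norm (u x) powr (p - 1) * (norm (u x))\<^sup>2 * (\<zeta> x)\<^sup>2"
          unfolding nu by (simp add: sum_distrib_left sum_distrib_right power2_eq_square)
        also have "\<dots> = norm (u x) powr (p + 1) * (\<zeta> x)\<^sup>2" by (simp add: powr_comb1)
        finally show "(\<Sum>i\<in>UNIV. norm (u x) powr (p - 1) * (a i x * a i x) * (\<zeta> x * \<zeta> x))
            = norm (u x) powr (p + 1) * (\<zeta> x)\<^sup>2" .
      qed
      finally show ?thesis ..
    qed
    have tf: "\<forall>i. test_fun (\<lambda>x. u x $ i * \<zeta> x)"
    proof
      fix i
      have sub: "closure {x. u x $ i * \<zeta> x \<noteq> 0} \<subseteq> K"
        unfolding K_def by (rule closure_mono) auto
      have "compact (K \<inter> closure {x. u x $ i * \<zeta> x \<noteq> 0})" by (rule compact_Int_closed[OF K closed_closure])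
      moreover have "K \<inter> closure {x. u x $ i * \<zeta> x \<noteq> 0} = closure {x. u x $ i * \<zeta> x \<noteq> 0}" using sub by blast
      ultimately show "test_fun (\<lambda>x. u x $ i * \<zeta> x)"
        unfolding test_fun_def using smooth_mult[OF smooth_u sz] by simp
    qed
    have st: "(\<Sum>i\<in>UNIV. (\<integral>x. norm (u x) powr (p - 1) * (u x $ i * \<zeta> x)\<^sup>2 \<partial>lborel))
     + (p - 1) * (\<Sum>i\<in>UNIV. \<Sum>j\<in>UNIV.
          (\<integral>x. norm (u x) powr (p - 3) * (u x $ i) * (u x $ j) * (u x $ i * \<zeta> x) * (u x $ j * \<zeta> x) \<partial>lborel))
     \<le> (\<Sum>i\<in>UNIV. (\<integral>x. (laplacian (\<lambda>x. u x $ i * \<zeta> x) x)\<^sup>2 \<partial>lborel))"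
    proof -
      have "\<forall>\<phi> :: 'm \<Rightarrow> real^'n \<Rightarrow> real. (\<forall>i. test_fun (\<phi> i)) \<longrightarrow>
     (\<Sum>i\<in>UNIV. (\<integral>x. norm (u x) powr (p - 1) * (\<phi> i x)\<^sup>2 \<partial>lborel))
     + (p - 1) * (\<Sum>i\<in>UNIV. \<Sum>j\<in>UNIV.
          (\<integral>x. norm (u x) powr (p - 3) * (u x $ i) * (u x $ j) * \<phi> i x * \<phi> j x \<partial>lborel))
     \<le> (\<Sum>i\<in>UNIV. (\<integral>x. (laplacian (\<phi> i) x)\<^sup>2 \<partial>lborel))"
        using stab unfolding stable_def .
      from spec[OF this, of "\<lambda>i x. u x $ i * \<zeta> x"] tf show ?thesis by simp
    qed
    have iS1: "integrable lborel (\<lambda>x. norm (u x) powr (p - 1) * (u x $ i * \<zeta> x)\<^sup>2)" for i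
      by (rule icK) (auto intro!: continuous_intros cpw1 smooth_cont[OF sz] smooth_cont[OF smooth_u] simp: zz)
    have s1: "(\<Sum>i\<in>UNIV. (\<integral>x. norm (u x) powr (p - 1) * (u x $ i * \<zeta> x)\<^sup>2 \<partial>lborel)) = U"
    proof -
      have "(\<Sum>i\<in>UNIV. (\<integral>x. norm (u x) powr (p - 1) * (u x $ i * \<zeta> x)\<^sup>2 \<partial>lborel))
         = (\<integral>x. (\<Sum>i\<in>UNIV. norm (u x) powr (p - 1) * (u x $ i * \<zeta> x)\<^sup>2) \<partial>lborel)"
        using iS1 by simp
      also have "\<dots> = U" unfolding U_def
      proof (rule Bochner_Integration.integral_cong[OF refl])
        fix x
        have "(\<Sum>i\<in>UNIV. norm (u x) powr (p - 1) * (u x $ i * \<zeta> x)\<^sup>2)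
            = norm (u x) powr (p - 1) * (norm (u x))\<^sup>2 * (\<zeta> x)\<^sup>2"
          unfolding normsq by (simp add: sum_distrib_left sum_distrib_right power2_eq_square algebra_simps)
        also have "\<dots> = norm (u x) powr (p + 1) * (\<zeta> x)\<^sup>2" by (simp add: powr_comb1)
        finally show "(\<Sum>i\<in>UNIV. norm (u x) powr (p - 1) * (u x $ i * \<zeta> x)\<^sup>2)
            = norm (u x) powr (p + 1) * (\<zeta> x)\<^sup>2" .
      qed
      finally show ?thesis .
    qed
    have mui[measurable]: "(\<lambda>x. u x $ i) \<in> borel_measurable lborel" for i
      using smooth_cont[OF smooth_u] by (simp add: borel_measurable_continuous_onI)
    have mnu[measurable]: "(\<lambda>x. norm (u x)) \<in> borel_measurable lborel"
      using continuous_on_norm[OF cu] by (simp add: borel_measurable_continuous_onI)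
    have mz[measurable]: "\<zeta> \<in> borel_measurable lborel"
      using smooth_cont[OF sz] by (simp add: borel_measurable_continuous_onI)
    have iS2: "integrable lborel (\<lambda>x. norm (u x) powr (p - 3) * (u x $ i) * (u x $ j) * (u x $ i * \<zeta> x) * (u x $ j * \<zeta> x))" for i j
    proof (rule Bochner_Integration.integrable_bound[OF iU])
      show "(\<lambda>x. norm (u x) powr (p - 3) * (u x $ i) * (u x $ j) * (u x $ i * \<zeta> x) * (u x $ j * \<zeta> x)) \<in> borel_measurable lborel"
        by measurable
      show "AE x in lborel. norm (norm (u x) powr (p - 3) * (u x $ i) * (u x $ j) * (u x $ i * \<zeta> x) * (u x $ j * \<zeta> x))
          \<le> norm (norm (u x) powr (p + 1) * (\<zeta> x)\<^sup>2)"
      proof (rule AE_I2)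
        fix x
        have bi: "(u x $ i)\<^sup>2 \<le> (norm (u x))\<^sup>2"
          using power_mono[OF component_le_norm_cart[of "u x" i] abs_ge_zero, of 2] by simp
        have bj: "(u x $ j)\<^sup>2 \<le> (norm (u x))\<^sup>2"
          using power_mono[OF component_le_norm_cart[of "u x" j] abs_ge_zero, of 2] by simp
        have "(u x $ i)\<^sup>2 * (u x $ j)\<^sup>2 \<le> (norm (u x))\<^sup>2 * (norm (u x))\<^sup>2"
          using bi bj by (intro mult_mono) auto
        then have "norm (u x) powr (p - 3) * (\<zeta> x)\<^sup>2 * ((u x $ i)\<^sup>2 * (u x $ j)\<^sup>2)
            \<le> norm (u x) powr (p - 3) * (\<zeta> x)\<^sup>2 * ((norm (u x))\<^sup>2 * (norm (u x))\<^sup>2)"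
          by (intro mult_left_mono) auto
        also have "\<dots> = norm (u x) powr (p + 1) * (\<zeta> x)\<^sup>2"
          using powr_comb2[of "norm (u x)" p] by (simp add: algebra_simps)
        finally show "norm (norm (u x) powr (p - 3) * (u x $ i) * (u x $ j) * (u x $ i * \<zeta> x) * (u x $ j * \<zeta> x))
          \<le> norm (norm (u x) powr (p + 1) * (\<zeta> x)\<^sup>2)"
          by (simp add: abs_mult power2_eq_square algebra_simps)
      qed
    qed
    have s2: "(\<Sum>i\<in>UNIV. \<Sum>j\<in>UNIV.
          (\<integral>x. norm (u x) powr (p - 3) * (u x $ i) * (u x $ j) * (u x $ i * \<zeta> x) * (u x $ j * \<zeta> x) \<partial>lborel)) = U"
    proof -
      have "(\<Sum>i\<in>UNIV. \<Sum>j\<in>UNIV.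
          (\<integral>x. norm (u x) powr (p - 3) * (u x $ i) * (u x $ j) * (u x $ i * \<zeta> x) * (u x $ j * \<zeta> x) \<partial>lborel))
        = (\<Sum>i\<in>UNIV. (\<integral>x. (\<Sum>j\<in>UNIV. norm (u x) powr (p - 3) * (u x $ i) * (u x $ j) * (u x $ i * \<zeta> x) * (u x $ j * \<zeta> x)) \<partial>lborel))"
        using iS2 by simp
      also have "\<dots> = (\<integral>x. (\<Sum>i\<in>UNIV. \<Sum>j\<in>UNIV. norm (u x) powr (p - 3) * (u x $ i) * (u x $ j) * (u x $ i * \<zeta> x) * (u x $ j * \<zeta> x)) \<partial>lborel)"
        using iS2 by (simp add: integral_sum integrable_sum)
      also have "\<dots> = U" unfolding U_def
      proof (rule Bochner_Integration.integral_cong[OF refl])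
        fix x
        have "(\<Sum>i\<in>UNIV. \<Sum>j\<in>UNIV. norm (u x) powr (p - 3) * (u x $ i) * (u x $ j) * (u x $ i * \<zeta> x) * (u x $ j * \<zeta> x))
           = (norm (u x) powr (p - 3) * (\<zeta> x)\<^sup>2) * ((\<Sum>i\<in>UNIV. u x $ i * u x $ i) * (\<Sum>j\<in>UNIV. u x $ j * u x $ j))"
        proof -
          have "(\<Sum>i\<in>UNIV. \<Sum>j\<in>UNIV. norm (u x) powr (p - 3) * (u x $ i) * (u x $ j) * (u x $ i * \<zeta> x) * (u x $ j * \<zeta> x))
            = (\<Sum>i\<in>UNIV. \<Sum>j\<in>UNIV. (norm (u x) powr (p - 3) * (\<zeta> x)\<^sup>2) * ((u x $ i * u x $ i) * (u x $ j * u x $ j)))"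
            by (intro sum.cong refl) (simp add: power2_eq_square algebra_simps)
          also have "\<dots> = (norm (u x) powr (p - 3) * (\<zeta> x)\<^sup>2) * ((\<Sum>i\<in>UNIV. u x $ i * u x $ i) * (\<Sum>j\<in>UNIV. u x $ j * u x $ j))"
            unfolding sum_product by (simp only: sum_distrib_left)
          finally show ?thesis .
        qed
        also have "\<dots> = norm (u x) powr (p - 3) * ((norm (u x))\<^sup>2 * (norm (u x))\<^sup>2) * (\<zeta> x)\<^sup>2"
          unfolding normsq[symmetric] by simp
        also have "\<dots> = norm (u x) powr (p + 1) * (\<zeta> x)\<^sup>2" using powr_comb2[of "norm (u x)" p] by (simp only: norm_ge_zero simp_thms)
        finally show "(\<Sum>i\<in>UNIV. \<Sum>j\<in>UNIV. norm (u x) powr (p - 3) * (u x $ i) * (u x $ j) * (u x $ i * \<zeta> x) * (u x $ j * \<zeta> x))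
           = norm (u x) powr (p + 1) * (\<zeta> x)\<^sup>2" .
      qed
      finally show ?thesis .
    qed
    have s3: "(\<Sum>i\<in>UNIV. (\<integral>x. (laplacian (\<lambda>x. u x $ i * \<zeta> x) x)\<^sup>2 \<partial>lborel)) = (\<Sum>i\<in>UNIV. S i)"
      unfolding S_def a_def by simp
    have pU: "p * U \<le> (\<Sum>i\<in>UNIV. S i)"
    proof -
      have "U + (p - 1) * U \<le> (\<Sum>i\<in>UNIV. S i)" using st unfolding s1 s2 s3 .
      then show ?thesis by (simp add: algebra_simps)
    qed
    have cgD: "continuous_on UNIV (grad D)" by (rule cont_grad[OF sD])
    have cgz: "continuous_on UNIV (grad \<zeta>)" by (rule cont_grad[OF sz])
    have R1e: "R1 = (\<integral>x. (norm (u x))\<^sup>2 * (norm (grad D x) * norm (grad \<zeta> x) + (D x)\<^sup>2 + \<bar>Q x\<bar>) \<partial>lborel)"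
      unfolding R1_def PnF D_def[symmetric] Q_def[symmetric] ..
    have iR1: "integrable lborel (\<lambda>x. (norm (u x))\<^sup>2 * (norm (grad D x) * norm (grad \<zeta> x) + (D x)\<^sup>2 + \<bar>Q x\<bar>))"
      by (rule icK) (auto intro!: continuous_intros cu cgD cgz smooth_cont[OF sD] smooth_cont[OF sQ] simp: zgr zD zQ)
    have iR2: "integrable lborel (\<lambda>x. norm (u x) * norm (w x) * (norm (grad \<zeta> x))\<^sup>2)"
      by (rule icK) (auto intro!: continuous_intros cu cw cgz simp: zgr)
    have R1p: "R1 \<ge> 0" unfolding R1e by (intro Bochner_Integration.integral_nonneg) auto
    have R2p: "R2 \<ge> 0" unfolding R2_def by (intro Bochner_Integration.integral_nonneg) auto
    have Tn: "T x = inner (grad D x) (grad \<zeta> x)" for x unfolding T_def grad_def inner_vec_def by simp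
    have uw: "(\<Sum>i\<in>UNIV. a i x * wf i x) = inner (u x) (w x)" for x
      unfolding inner_vec_def wi wf_def a_def by simp
    have iCf: "integrable lborel (\<lambda>x. a i x * wf i x * P x)" for i by (rule icS) (auto intro!: ss simp: zs)
    have iAQ: "integrable lborel (\<lambda>x. a i x * a i x * Q x)" for i by (rule icS) (auto intro!: ss simp: zs)
    have iAT: "integrable lborel (\<lambda>x. a i x * a i x * (T x + D x * D x))" for i by (rule icS) (auto intro!: ss simp: zs)
    have iA2: "integrable lborel (\<lambda>x. a i x * a i x * (D x * D x))" for i by (rule icS) (auto intro!: ss simp: zs)
    have g5: "- (\<Sum>i\<in>UNIV. Cf i) \<le> R2"
    proof -
      have "- (\<Sum>i\<in>UNIV. Cf i) = (\<integral>x. - (inner (u x) (w x) * P x) \<partial>lborel)"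
        unfolding Cf_def using iCf by (simp add: uw[symmetric] sum_distrib_right)
      also have "\<dots> \<le> R2" unfolding R2_def
      proof (rule integral_mono)
        show "integrable lborel (\<lambda>x. - (inner (u x) (w x) * P x))"
          using iCf by (simp add: uw[symmetric] sum_distrib_right)
        show "integrable lborel (\<lambda>x. norm (u x) * norm (w x) * (norm (grad \<zeta> x))\<^sup>2)" by (rule iR2)
        fix x
        have "- inner (u x) (w x) \<le> norm (u x) * norm (w x)" using Cauchy_Schwarz_ineq2[of "u x" "w x"] by linarith
        moreover have "P x \<ge> 0" unfolding Pn by simp
        ultimately show "- (inner (u x) (w x) * P x) \<le> norm (u x) * norm (w x) * (norm (grad \<zeta> x))\<^sup>2"
          unfolding Pn[symmetric] by (metis minus_mult_left mult_right_mono)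
      qed
      finally show ?thesis .
    qed
    have g6: "(\<Sum>i\<in>UNIV. AQ i) \<le> R1"
    proof -
      have "(\<Sum>i\<in>UNIV. AQ i) = (\<integral>x. (norm (u x))\<^sup>2 * Q x \<partial>lborel)"
        unfolding AQ_def using iAQ by (simp add: nu sum_distrib_right)
      also have "\<dots> \<le> R1" unfolding R1e
      proof (rule integral_mono[OF _ iR1])
        show "integrable lborel (\<lambda>x. (norm (u x))\<^sup>2 * Q x)" using iAQ by (simp add: nu sum_distrib_right)
        fix x show "(norm (u x))\<^sup>2 * Q x \<le> (norm (u x))\<^sup>2 * (norm (grad D x) * norm (grad \<zeta> x) + (D x)\<^sup>2 + \<bar>Q x\<bar>)"
          using abs_ge_self[of "Q x"] mult_nonneg_nonneg[OF norm_ge_zero norm_ge_zero, of "grad D x" "grad \<zeta> x"] zero_le_power2[of "D x"] by (intro mult_left_mono) (linarith, simp)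
      qed
      finally show ?thesis .
    qed
    have g7: "- (\<Sum>i\<in>UNIV. AT i) \<le> R1"
    proof -
      have "- (\<Sum>i\<in>UNIV. AT i) = (\<integral>x. - ((norm (u x))\<^sup>2 * (T x + D x * D x)) \<partial>lborel)"
        unfolding AT_def using iAT by (simp add: nu sum_distrib_right)
      also have "\<dots> \<le> R1" unfolding R1e
      proof (rule integral_mono[OF _ iR1])
        show "integrable lborel (\<lambda>x. - ((norm (u x))\<^sup>2 * (T x + D x * D x)))" using iAT by (simp add: nu sum_distrib_right)
        fix x
        have "- T x \<le> norm (grad D x) * norm (grad \<zeta> x)" unfolding Tn using Cauchy_Schwarz_ineq2[of "grad D x" "grad \<zeta> x"] by linarith
        then have hT: "- (T x + D x * D x) \<le> norm (grad D x) * norm (grad \<zeta> x) + (D x)\<^sup>2 + \<bar>Q x\<bar>"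
          using abs_ge_zero[of "Q x"] zero_le_square[of "D x"] unfolding power2_eq_square by linarith
        show "- ((norm (u x))\<^sup>2 * (T x + D x * D x)) \<le> (norm (u x))\<^sup>2 * (norm (grad D x) * norm (grad \<zeta> x) + (D x)\<^sup>2 + \<bar>Q x\<bar>)"
          using mult_left_mono[OF hT, of "(norm (u x))\<^sup>2"] by (simp add: algebra_simps)
      qed
      finally show ?thesis .
    qed
    have g8: "(\<Sum>i\<in>UNIV. A2 i) \<le> R1"
    proof -
      have "(\<Sum>i\<in>UNIV. A2 i) = (\<integral>x. (norm (u x))\<^sup>2 * (D x * D x) \<partial>lborel)"
        unfolding A2_def using iA2 by (simp add: nu sum_distrib_right)
      also have "\<dots> \<le> R1" unfolding R1e
      proof (rule integral_mono[OF _ iR1])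
        show "integrable lborel (\<lambda>x. (norm (u x))\<^sup>2 * (D x * D x))" using iA2 by (simp add: nu sum_distrib_right)
        fix x show "(norm (u x))\<^sup>2 * (D x * D x) \<le> (norm (u x))\<^sup>2 * (norm (grad D x) * norm (grad \<zeta> x) + (D x)\<^sup>2 + \<bar>Q x\<bar>)"
          by (intro mult_left_mono) (auto simp: power2_eq_square)
      qed
      finally show ?thesis .
    qed
    have pU1: "p * U - U \<le> 6 * R2 + 5 * R1"
      using pU sU sE1 sE2 sE3 sE4 g5 g6 g7 g8 by linarith
    have kp: "k * (p - 1) = 1" using p by (simp add: k_def)
    have "U = k * (p * U - U)" using kp by (simp add: algebra_simps)
    also have "\<dots> \<le> k * (6 * R2 + 5 * R1)" using pU1 kpos by (intro mult_left_mono) auto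
    finally have Uk: "U \<le> 6 * (k * R2) + 5 * (k * R1)" by (simp add: algebra_simps)
    have Wb: "Wt \<le> 2 * U + 36 * R2 + 24 * R1"
      using sWt sU sE1 sE4 sY1 sY2 g5 g6 g8 by linarith
    have kR: "k * R1 \<ge> 0" "k * R2 \<ge> 0" using kpos R1p R2p by auto
    have Ce: "C * R1 + C * R2 = 36 * R1 + 36 * R2 + 18 * (k * R1) + 18 * (k * R2)"
      by (simp add: C_def algebra_simps)
    show ?thesis unfolding LHS R1_def[symmetric] R2_def[symmetric] Ce
      using Uk Wb kR R1p R2p by linarith
  qed
  show ?thesis using Cpos main by blast
qed

end
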